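(* Let $I\in\{0,1\}^{n\times m}$, $i\in X$, $j\in Y$. Then $\mathcal{E}(I)_{ij}=1$ if and only if all of the following hold: (a) $I_{ij}=1$; (b) for every $i'\in X$ with $\{i'\}^\uparrow\subsetneq\{i\}^\uparrow$ we have $I_{i'j}=0$; (c) for every $j'\in Y$ with $\{j'\}^\downarrow\subsetneq\{j\}^\downarrow$ we have $I_{ij'}=0$.
   Context: $X=\{1,\dots,n\}$, $Y=\{1,\dots,m\}$. For $C\subseteq X$, $D\subseteq Y$: $C^{\uparrow}=\{j\in Y\mid \forall i\in C: I_{ij}=1\}$, $D^{\downarrow}=\{i\in X\mid \forall j\in D: I_{ij}=1\}$ (so $\{i\}^\uparrow$ is the set of columns with a 1 in row $i$, $\{j\}^\downarrow$ the set of rows with a 1 in column $j$). $\mathcal{B}(I)=\{\langle C,D\rangle\mid C^\uparrow=D, D^\downarrow=C\}$ ordered by $\langle C_1,D_1\rangle\leq\langle C_2,D_2\rangle$ iff $C_1\subseteq C_2$; $\gamma(i)=\langle\{i\}^{\uparrow\downarrow},\{i\}^\uparrow\rangle$, $\mu(j)=\langle\{j\}^\downarrow,\{j\}^{\downarrow\uparrow}\rangle$, $\mathcal{I}_{ij}=\{c\in\mathcal{B}(I)\mid\gamma(i)\leq c\leq\mu(j)\}$. $\mathcal{E}(I)\in\{0,1\}^{n\times m}$: $\mathcal{E}(I)_{ij}=1$ iff $\mathcal{I}_{ij}$ is non-empty and minimal w.r.t. $\subseteq$ among the non-empty sets $\mathcal{I}_{i'j'}$. *)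

theory Defs
  imports Main
begin

text \<open>A Boolean matrix I in {0,1}^(n x m) is modelled as a predicate
  I :: nat => nat => bool on rows X = {1..n} and columns Y = {1..m};
  I i j holds iff I_ij = 1.  Values outside X x Y are irrelevant.\<close>

definition up :: "nat \<Rightarrow> (nat \<Rightarrow> nat \<Rightarrow> bool) \<Rightarrow> nat set \<Rightarrow> nat set" where
  "up m I C = {j \<in> {1..m}. \<forall>i\<in>C. I i j}"

definition down :: "nat \<Rightarrow> (nat \<Rightarrow> nat \<Rightarrow> bool) \<Rightarrow> nat set \<Rightarrow> nat set" where
  "down n I D = {i \<in> {1..n}. \<forall>j\<in>D. I i j}"

definition concepts :: "nat \<Rightarrow> nat \<Rightarrow> (nat \<Rightarrow> nat \<Rightarrow> bool) \<Rightarrow> (nat set \<times> nat set) set" where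
  "concepts n m I = {(C, D). C \<subseteq> {1..n} \<and> D \<subseteq> {1..m} \<and> up m I C = D \<and> down n I D = C}"

definition concept_le :: "nat set \<times> nat set \<Rightarrow> nat set \<times> nat set \<Rightarrow> bool" where
  "concept_le c1 c2 \<longleftrightarrow> fst c1 \<subseteq> fst c2"

definition gamma :: "nat \<Rightarrow> nat \<Rightarrow> (nat \<Rightarrow> nat \<Rightarrow> bool) \<Rightarrow> nat \<Rightarrow> nat set \<times> nat set" where
  "gamma n m I i = (down n I (up m I {i}), up m I {i})"

definition mu :: "nat \<Rightarrow> nat \<Rightarrow> (nat \<Rightarrow> nat \<Rightarrow> bool) \<Rightarrow> nat \<Rightarrow> nat set \<times> nat set" where
  "mu n m I j = (down n I {j}, up m I (down n I {j}))"

definition interval :: "nat \<Rightarrow> nat \<Rightarrow> (nat \<Rightarrow> nat \<Rightarrow> bool) \<Rightarrow> nat \<Rightarrow> nat \<Rightarrow> (nat set \<times> nat set) set" where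
  "interval n m I i j = {c \<in> concepts n m I. concept_le (gamma n m I i) c \<and> concept_le c (mu n m I j)}"

definition E :: "nat \<Rightarrow> nat \<Rightarrow> (nat \<Rightarrow> nat \<Rightarrow> bool) \<Rightarrow> nat \<Rightarrow> nat \<Rightarrow> bool" where
  "E n m I i j \<longleftrightarrow> i \<in> {1..n} \<and> j \<in> {1..m} \<and> interval n m I i j \<noteq> {} \<and>
     (\<forall>i'\<in>{1..n}. \<forall>j'\<in>{1..m}. interval n m I i' j' \<noteq> {} \<longrightarrow>
        \<not> (interval n m I i' j' \<subset> interval n m I i j))"

end

theory Submission
  imports Defs
begin

lemma up_sub: "up m I C \<subseteq> {1..m}" by (auto simp: up_def)
lemma down_sub: "down n I D \<subseteq> {1..n}" by (auto simp: down_def)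

lemma ext_in: "C \<subseteq> {1..n} \<Longrightarrow> C \<subseteq> down n I (up m I C)"
  by (auto simp: up_def down_def)
lemma int_in: "D \<subseteq> {1..m} \<Longrightarrow> D \<subseteq> up m I (down n I D)"
  by (auto simp: up_def down_def)

lemma concept_ext: "(C,D) \<in> concepts n m I \<Longrightarrow> i \<in> {1..n} \<Longrightarrow>
   i \<in> C \<longleftrightarrow> down n I (up m I {i}) \<subseteq> C"
  by (auto simp: concepts_def up_def down_def)

lemma concept_int: "(C,D) \<in> concepts n m I \<Longrightarrow> j \<in> {1..m} \<Longrightarrow>
   j \<in> D \<longleftrightarrow> up m I (down n I {j}) \<subseteq> D"
  by (auto simp: concepts_def up_def down_def)

lemma gamma_concept: "i \<in> {1..n} \<Longrightarrow> gamma n m I i \<in> concepts n m I"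
  by (auto simp: gamma_def concepts_def up_def down_def)

lemma mu_concept: "j \<in> {1..m} \<Longrightarrow> mu n m I j \<in> concepts n m I"
  by (auto simp: mu_def concepts_def up_def down_def)

lemma interval_char:
  assumes "i \<in> {1..n}" "j \<in> {1..m}"
  shows "interval n m I i j = {c \<in> concepts n m I. i \<in> fst c \<and> j \<in> snd c}"
proof -
  have "concept_le (gamma n m I i) c \<longleftrightarrow> i \<in> fst c" if "c \<in> concepts n m I" for c
    using concept_ext[of "fst c" "snd c" n m I i] that assms
    by (simp add: concept_le_def gamma_def)
  moreover have "concept_le c (mu n m I j) \<longleftrightarrow> j \<in> snd c" if "c \<in> concepts n m I" for c
    using that assms by (auto simp: concept_le_def mu_def concepts_def up_def down_def)
  ultimately show ?thesis by (auto simp: interval_def)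
qed

lemma gamma_mem: "i \<in> {1..n} \<Longrightarrow> i \<in> fst (gamma n m I i)"
  by (auto simp: gamma_def up_def down_def)
lemma mu_mem: "j \<in> {1..m} \<Longrightarrow> j \<in> snd (mu n m I j)"
  by (auto simp: mu_def up_def down_def)

lemma nonempty_iff:
  assumes "i \<in> {1..n}" "j \<in> {1..m}"
  shows "interval n m I i j \<noteq> {} \<longleftrightarrow> I i j"
proof
  assume "interval n m I i j \<noteq> {}"
  then obtain C D where "(C,D) \<in> concepts n m I" "i \<in> C" "j \<in> D"
    using interval_char[OF assms, where I=I] by auto
  then show "I i j" by (auto simp: concepts_def up_def)
next
  assume "I i j"
  then have "gamma n m I i \<in> interval n m I i j"
    using assms gamma_concept[of i n m I] gamma_mem[of i n m I]
    by (auto simp: interval_char gamma_def up_def)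
  then show "interval n m I i j \<noteq> {}" by auto
qed

theorem lemma2:
  fixes n m :: nat and I :: "nat \<Rightarrow> nat \<Rightarrow> bool" and i j :: nat
  assumes "i \<in> {1..n}" and "j \<in> {1..m}"
  shows "E n m I i j \<longleftrightarrow>
           I i j
         \<and> (\<forall>i'\<in>{1..n}. up m I {i'} \<subset> up m I {i} \<longrightarrow> \<not> I i' j)
         \<and> (\<forall>j'\<in>{1..m}. down n I {j'} \<subset> down n I {j} \<longrightarrow> \<not> I i j')"
proof
  assume E: "E n m I i j"
  then have Iij: "I i j" using nonempty_iff[OF assms] by (simp add: E_def)
  have min: "\<And>i' j'. i' \<in> {1..n} \<Longrightarrow> j' \<in> {1..m} \<Longrightarrow> I i' j' \<Longrightarrow>
      \<not> interval n m I i' j' \<subset> interval n m I i j"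
    using E nonempty_iff by (auto simp: E_def)
  have b: "\<not> I i' j" if i': "i' \<in> {1..n}" and lt: "up m I {i'} \<subset> up m I {i}" for i'
  proof
    assume Ii'j: "I i' j"
    have "interval n m I i' j \<subseteq> interval n m I i j"
    proof
      fix c assume "c \<in> interval n m I i' j"
      then obtain C D where c: "c = (C,D)" "(C,D) \<in> concepts n m I" "i' \<in> C" "j \<in> D"
        using interval_char[OF i' assms(2), where I=I] by (cases c) auto
      have "D \<subseteq> up m I {i'}" using c by (auto simp: concepts_def up_def)
      then have "D \<subseteq> up m I {i}" using lt by auto
      then have "i \<in> C" using c assms(1) by (auto simp: concepts_def up_def down_def)
      then show "c \<in> interval n m I i j" using c interval_char[OF assms, where I=I] by auto
    qed
    moreover have "gamma n m I i \<in> interval n m I i j"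
      using assms Iij gamma_concept[of i n m I] gamma_mem[of i n m I]
      by (auto simp: interval_char gamma_def up_def)
    moreover have "gamma n m I i \<notin> interval n m I i' j"
    proof
      assume "gamma n m I i \<in> interval n m I i' j"
      then have "i' \<in> down n I (up m I {i})" using interval_char[OF i' assms(2), where I=I]
        by (auto simp: gamma_def)
      then have "up m I {i} \<subseteq> up m I {i'}" by (auto simp: down_def up_def)
      then show False using lt by auto
    qed
    ultimately show False using min[OF i' assms(2) Ii'j] by auto
  qed
  have c: "\<not> I i j'" if j': "j' \<in> {1..m}" and lt: "down n I {j'} \<subset> down n I {j}" for j'
  proof
    assume Iij': "I i j'"
    have "interval n m I i j' \<subseteq> interval n m I i j"
    proof
      fix c assume "c \<in> interval n m I i j'"
      then obtain C D where c: "c = (C,D)" "(C,D) \<in> concepts n m I" "i \<in> C" "j' \<in> D"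
        using interval_char[OF assms(1) j', where I=I] by (cases c) auto
      have "C \<subseteq> down n I {j'}" using c by (auto simp: concepts_def up_def down_def)
      then have "C \<subseteq> down n I {j}" using lt by auto
      then have "j \<in> D" using c assms(2) by (auto simp: concepts_def up_def down_def)
      then show "c \<in> interval n m I i j" using c interval_char[OF assms, where I=I] by auto
    qed
    moreover have "mu n m I j \<in> interval n m I i j"
      using assms Iij mu_concept[of j m n I] mu_mem[of j m n I]
      by (auto simp: interval_char mu_def down_def)
    moreover have "mu n m I j \<notin> interval n m I i j'"
    proof
      assume "mu n m I j \<in> interval n m I i j'"
      then have "j' \<in> up m I (down n I {j})" using interval_char[OF assms(1) j', where I=I]
        by (auto simp: mu_def)
      then have "down n I {j} \<subseteq> down n I {j'}" by (auto simp: down_def up_def)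
      then show False using lt by auto
    qed
    ultimately show False using min[OF assms(1) j' Iij'] by auto
  qed
  show "I i j
         \<and> (\<forall>i'\<in>{1..n}. up m I {i'} \<subset> up m I {i} \<longrightarrow> \<not> I i' j)
         \<and> (\<forall>j'\<in>{1..m}. down n I {j'} \<subset> down n I {j} \<longrightarrow> \<not> I i j')"
    using Iij b c by blast
next
  assume H: "I i j
         \<and> (\<forall>i'\<in>{1..n}. up m I {i'} \<subset> up m I {i} \<longrightarrow> \<not> I i' j)
         \<and> (\<forall>j'\<in>{1..m}. down n I {j'} \<subset> down n I {j} \<longrightarrow> \<not> I i j')"
  have "\<not> interval n m I i' j' \<subset> interval n m I i j"
    if i': "i' \<in> {1..n}" and j': "j' \<in> {1..m}" and ne: "interval n m I i' j' \<noteq> {}" for i' j'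
  proof
    assume sub: "interval n m I i' j' \<subset> interval n m I i j"
    have Ii'j': "I i' j'" using ne nonempty_iff[OF i' j'] by simp
    have "gamma n m I i' \<in> interval n m I i' j'"
      using i' j' Ii'j' gamma_concept[of i' n m I] gamma_mem[of i' n m I]
      by (auto simp: interval_char gamma_def up_def)
    then have "gamma n m I i' \<in> interval n m I i j" using sub by auto
    then have g: "i \<in> down n I (up m I {i'})" "j \<in> up m I {i'}"
      using interval_char[OF assms, where I=I] by (auto simp: gamma_def)
    then have u1: "up m I {i'} \<subseteq> up m I {i}" and Ii'j: "I i' j"
      by (auto simp: down_def up_def)
    have "mu n m I j' \<in> interval n m I i' j'"
      using i' j' Ii'j' mu_concept[of j' m n I] mu_mem[of j' m n I]
      by (auto simp: interval_char mu_def down_def)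
    then have "mu n m I j' \<in> interval n m I i j" using sub by auto
    then have g2: "j \<in> up m I (down n I {j'})" "i \<in> down n I {j'}"
      using interval_char[OF assms, where I=I] by (auto simp: mu_def)
    then have d1: "down n I {j'} \<subseteq> down n I {j}" and Iij': "I i j'"
      by (auto simp: down_def up_def)
    have ueq: "up m I {i'} = up m I {i}" using H i' Ii'j u1 by blast
    have deq: "down n I {j'} = down n I {j}" using H j' Iij' d1 by blast
    have "interval n m I i j \<subseteq> interval n m I i' j'"
    proof
      fix c assume "c \<in> interval n m I i j"
      then obtain C D where c: "c = (C,D)" "(C,D) \<in> concepts n m I" "i \<in> C" "j \<in> D"
        using interval_char[OF assms, where I=I] by (cases c) auto
      have "i' \<in> C" using concept_ext[OF c(2) i'] concept_ext[OF c(2) assms(1)] c ueq by simp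
      moreover have "j' \<in> D" using concept_int[OF c(2) j'] concept_int[OF c(2) assms(2)] c deq by simp
      ultimately show "c \<in> interval n m I i' j'" using c interval_char[OF i' j', where I=I] by auto
    qed
    then show False using sub by auto
  qed
  then show "E n m I i j" using assms H nonempty_iff[OF assms] by (auto simp: E_def)
qed

end
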